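(* Let $\kappa\in\mathcal O_F^\times$ with $d(\kappa)=2e-1$ and let $\delta\in\mathcal O_F^\times$. Then $2^{-1}\pi A(2,2\rho)\perp\langle\Delta\delta\rangle\cong\prec\delta\kappa^{\#},-\delta\kappa^{\#}\kappa\pi^{2-2e},\delta\kappa\succ$.
   Context: $F$ dyadic local field, $\mathcal O_F$, $\mathcal O_F^\times$, uniformizer $\pi$, valuation $\operatorname{ord}$, $e=\operatorname{ord}(2)$; $\mathfrak d(c)=\bigcap_{x\in F}(c-x^2)\mathcal O_F$, $d(c)=\operatorname{ord}(c^{-1}\mathfrak d(c))$; $\rho\in\mathcal O_F^\times$ with $\Delta=1-4\rho$, $\mathfrak d(\Delta)=4\mathcal O_F$. $\gamma A(\xi,\eta)$ is the binary lattice with Gram matrix $\begin{pmatrix}\gamma\xi&\gamma\\\gamma&\gamma\eta\end{pmatrix}$; $\langle a\rangle$ unary lattice. Since $d(\kappa)=2e-1$ is finite and even order, write $\kappa=s^2(1+r\pi^{2e-1})$ with $r,s\in\mathcal O_F^\times$ and set $\kappa^{\#}=1+4\rho r^{-1}\pi^{1-2e}$ (any such choice). BONG notation: $\prec a_1,\ldots,a_k\succ$ is the lattice $L$ having a BONG $x_1,\ldots,x_k$ with $Q(x_i)=a_i$, where $x_1,\ldots,x_k\in FL$ is a BONG of $L$ if $x_1\in L$ with $Q(x_1)\mathcal O_F$ equal to the norm ideal of $L$ (generated by $Q(L)$) and $x_2,\ldots,x_k$ is a BONG of the projection of $L$ onto $(Fx_1)^\perp$. *)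

theory Defs
  imports "HOL-Analysis.Analysis"
begin

text \<open>A valuation is a map v :: 'a => int; its value at 0 is irrelevant
(ord 0 = infinity is encoded by the disjunct x = 0).\<close>

definition Oring :: "('a::field \<Rightarrow> int) \<Rightarrow> 'a set" where
  "Oring v = {x. x = 0 \<or> 0 \<le> v x}"

definition is_unit :: "('a::field \<Rightarrow> int) \<Rightarrow> 'a \<Rightarrow> bool" where
  "is_unit v x \<longleftrightarrow> x \<noteq> 0 \<and> v x = 0"

text \<open>F complete, discretely valued (normalized), characteristic 0, with finite
residue field of characteristic 2: i.e. a dyadic local field (finite extension of Q_2).\<close>

definition dyadic_local_field :: "('a::field \<Rightarrow> int) \<Rightarrow> bool" where
  "dyadic_local_field v \<longleftrightarrow>
     (\<forall>x y. x \<noteq> 0 \<longrightarrow> y \<noteq> 0 \<longrightarrow> v (x * y) = v x + v y) \<and>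
     (\<forall>x y. x \<noteq> 0 \<longrightarrow> y \<noteq> 0 \<longrightarrow> x + y \<noteq> 0 \<longrightarrow> min (v x) (v y) \<le> v (x + y)) \<and>
     (\<exists>p. p \<noteq> 0 \<and> v p = 1) \<and>
     (\<forall>a :: nat \<Rightarrow> 'a.
        (\<forall>N::int. \<exists>M. \<forall>m\<ge>M. \<forall>n\<ge>M. a m = a n \<or> N \<le> v (a m - a n)) \<longrightarrow>
        (\<exists>l. \<forall>N::int. \<exists>M. \<forall>n\<ge>M. a n = l \<or> N \<le> v (a n - l))) \<and>
     (\<exists>R. finite R \<and> R \<subseteq> Oring v \<and> (\<forall>x\<in>Oring v. \<exists>r\<in>R. x = r \<or> 1 \<le> v (x - r))) \<and>
     (2::'a) \<noteq> 0 \<and> 0 < v 2"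

definition pid :: "('a::field \<Rightarrow> int) \<Rightarrow> 'a \<Rightarrow> 'a set" where
  "pid v a = {c * a | c. c \<in> Oring v}"

definition oideal :: "('a::field \<Rightarrow> int) \<Rightarrow> 'a set \<Rightarrow> 'a set" where
  "oideal v S = {y. \<exists>(n::nat) c s. (\<forall>i<n. c i \<in> Oring v \<and> s i \<in> S) \<and> y = (\<Sum>i<n. c i * s i)}"

definition ideal_ord :: "('a::field \<Rightarrow> int) \<Rightarrow> 'a set \<Rightarrow> int \<Rightarrow> bool" where
  "ideal_ord v I n \<longleftrightarrow> (\<exists>a\<in>I. a \<noteq> 0 \<and> v a = n) \<and> (\<forall>a\<in>I. a \<noteq> 0 \<longrightarrow> n \<le> v a)"

definition qdefect :: "('a::field \<Rightarrow> int) \<Rightarrow> 'a \<Rightarrow> 'a set" where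
  "qdefect v c = (\<Inter>x. pid v (c - x^2))"

definition Bf :: "'a::field ^'n^'n \<Rightarrow> 'a^'n \<Rightarrow> 'a^'n \<Rightarrow> 'a" where
  "Bf G x y = (\<Sum>i\<in>UNIV. \<Sum>j\<in>UNIV. x$i * G$i$j * y$j)"

definition Qf :: "'a::field ^'n^'n \<Rightarrow> 'a^'n \<Rightarrow> 'a" where
  "Qf G x = Bf G x x"

definition symm :: "'a ^'n^'n \<Rightarrow> bool" where
  "symm G \<longleftrightarrow> (\<forall>i j. G$i$j = G$j$i)"

definition projperp :: "'a::field ^'n^'n \<Rightarrow> 'a^'n \<Rightarrow> 'a^'n \<Rightarrow> 'a^'n" where
  "projperp G x y = y - (Bf G x y / Qf G x) *s x"

text \<open>BONG (basis of orthogonal norm generators), recursively as in the paper;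
the norm ideal n(L) is the O_F-module generated by Q(L).\<close>
fun bong :: "('a::field \<Rightarrow> int) \<Rightarrow> 'a^'n^'n \<Rightarrow> ('a^'n) list \<Rightarrow> ('a^'n) set \<Rightarrow> bool" where
  "bong v G [] L \<longleftrightarrow> L = {0}"
| "bong v G (x # xs) L \<longleftrightarrow>
     x \<in> L \<and> Qf G x \<noteq> 0 \<and> pid v (Qf G x) = oideal v (Qf G ` L) \<and>
     bong v G xs (projperp G x ` L)"

definition lattice_iso :: "'a::field ^'n^'n \<Rightarrow> 'a^'n^'n \<Rightarrow> ('a^'n \<Rightarrow> 'a^'n) \<Rightarrow> ('a^'n) set \<Rightarrow> ('a^'n) set \<Rightarrow> bool" where
  "lattice_iso G1 G2 \<sigma> L M \<longleftrightarrow>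
     (\<forall>x y. \<sigma> (x + y) = \<sigma> x + \<sigma> y) \<and> (\<forall>c x. \<sigma> (c *s x) = c *s \<sigma> x) \<and> bij \<sigma> \<and>
     (\<forall>x y. Bf G2 (\<sigma> x) (\<sigma> y) = Bf G1 x y) \<and> \<sigma> ` L = M"

text \<open>The standard lattice O_F^n (the lattice with basis e_1..e_n, Gram matrix G).\<close>
definition stdlat :: "('a::field \<Rightarrow> int) \<Rightarrow> ('a^'n) set" where
  "stdlat v = {x. \<forall>i. x$i \<in> Oring v}"

text \<open>Gram matrix of 2^{-1} pi A(2, 2 rho) \<perp> <Delta delta>, i.e.
 [[pi, pi/2, 0], [pi/2, pi rho, 0], [0, 0, Delta delta]], indices 1,2,3 of type 3.\<close>
definition gram_lhs :: "'a::field \<Rightarrow> 'a \<Rightarrow> 'a \<Rightarrow> 'a^3^3" where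
  "gram_lhs \<pi> \<rho> \<delta> = (\<chi> i j.
     if i = 1 \<and> j = 1 then (\<pi>/2) * 2
     else if (i = 1 \<and> j = 2) \<or> (i = 2 \<and> j = 1) then \<pi>/2
     else if i = 2 \<and> j = 2 then (\<pi>/2) * (2 * \<rho>)
     else if i = 3 \<and> j = 3 then (1 - 4 * \<rho>) * \<delta>
     else 0)"

definition kappa_sharp :: "'a::field \<Rightarrow> 'a \<Rightarrow> 'a \<Rightarrow> nat \<Rightarrow> 'a" where
  "kappa_sharp \<rho> r \<pi> e = 1 + 4 * \<rho> * inverse r / \<pi> ^ (2 * e - 1)"

end

theory Submission
  imports Defs
begin

definition ge :: "('a::field \<Rightarrow> int) \<Rightarrow> 'a \<Rightarrow> int \<Rightarrow> bool" where
  "ge v x n \<longleftrightarrow> x = 0 \<or> n \<le> v x"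

primrec itr :: "'a::field \<Rightarrow> nat \<Rightarrow> 'a" where
  "itr c 0 = 0"
| "itr c (Suc n) = c - (itr c n)^2"

locale dlf =
  fixes v :: "'a::field \<Rightarrow> int"
  assumes D: "dyadic_local_field v"
begin

lemmas D' = D[unfolded dyadic_local_field_def]
lemma vmult: "x \<noteq> 0 \<Longrightarrow> y \<noteq> 0 \<Longrightarrow> v (x*y) = v x + v y"
  using conjunct1[OF D'] by blast
lemma vadd: "x \<noteq> 0 \<Longrightarrow> y \<noteq> 0 \<Longrightarrow> x+y \<noteq> 0 \<Longrightarrow> min (v x) (v y) \<le> v (x+y)"
  using conjunct1[OF conjunct2[OF D']] by blast
lemma two_nz: "(2::'a) \<noteq> 0" and v2: "0 < v 2"
  using conjunct2[OF conjunct2[OF conjunct2[OF conjunct2[OF conjunct2[OF D']]]]] by auto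
lemma complete: fixes a :: "nat \<Rightarrow> 'a" assumes "(\<forall>N::int. \<exists>M. \<forall>m\<ge>M. \<forall>n\<ge>M. a m = a n \<or> N \<le> v (a m - a n))"
  shows "(\<exists>l. \<forall>N::int. \<exists>M. \<forall>n\<ge>M. a n = l \<or> N \<le> v (a n - l))"
  using assms conjunct1[OF conjunct2[OF conjunct2[OF conjunct2[OF D']]]] by blast
lemma finres: "\<exists>R. finite R \<and> R \<subseteq> Oring v \<and> (\<forall>x\<in>Oring v. \<exists>r\<in>R. x = r \<or> 1 \<le> v (x - r))"
  using conjunct1[OF conjunct2[OF conjunct2[OF conjunct2[OF conjunct2[OF D']]]]] by assumption

lemma v1: "v 1 = 0" using vmult[of 1 1] by simp
lemma vm1: "v (-1) = 0" using vmult[of "-1" "-1"] v1 by simp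
lemma vneg: "v (-x) = v x"
proof (cases "x = 0")
  case False thus ?thesis using vmult[of "-1" x] vm1 by simp
qed simp
lemma vinv: "x \<noteq> 0 \<Longrightarrow> v (inverse x) = - v x"
  using vmult[of x "inverse x"] v1 by simp
lemma vdiv: "x \<noteq> 0 \<Longrightarrow> y \<noteq> 0 \<Longrightarrow> v (x / y) = v x - v y"
  by (simp add: divide_inverse vmult vinv)
lemma vpow: "x \<noteq> 0 \<Longrightarrow> v (x^n) = int n * v x"
  by (induction n) (auto simp: v1 vmult algebra_simps)

lemma ge_0[simp]: "ge v 0 n" by (simp add: ge_def)
lemma ge_mono: "ge v x n \<Longrightarrow> m \<le> n \<Longrightarrow> ge v x m" by (auto simp: ge_def)
lemma ge_v: "ge v x (v x)" by (simp add: ge_def)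
lemma ge_neg[simp]: "ge v (-x) n \<longleftrightarrow> ge v x n" by (simp add: ge_def vneg)
lemma ge_add: assumes "ge v x n" "ge v y n" shows "ge v (x+y) n"
proof (cases "x = 0 \<or> y = 0 \<or> x+y = 0")
  case True thus ?thesis using assms by auto
next
  case False then have "min (v x) (v y) \<le> v (x+y)" by (intro vadd) auto
  thus ?thesis using assms False by (auto simp: ge_def)
qed
lemma ge_diff: "ge v x n \<Longrightarrow> ge v y n \<Longrightarrow> ge v (x-y) n"
  using ge_add[of x n "-y"] by simp
lemma ge_mult: assumes "ge v x m" "ge v y n" shows "ge v (x*y) (m+n)"
proof (cases "x = 0 \<or> y = 0")
  case True thus ?thesis by auto
next
  case False thus ?thesis using assms vmult[of x y] by (auto simp: ge_def)
qed
lemma ge_mult0: "ge v x 0 \<Longrightarrow> ge v y n \<Longrightarrow> ge v (x*y) n"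
  using ge_mult[of x 0 y n] by simp
lemma ge_mult0': "ge v x n \<Longrightarrow> ge v y 0 \<Longrightarrow> ge v (x*y) n"
  using ge_mult[of x n y 0] by simp
lemma ge_one: "ge v 1 0" by (simp add: ge_def v1)
lemma ge_pow: assumes "ge v x n" shows "ge v (x^k) (int k * n)"
proof (induction k)
  case 0 show ?case by (simp add: ge_one)
next
  case (Suc k)
  have "ge v (x * x^k) (n + int k * n)" by (rule ge_mult[OF assms Suc.IH])
  thus ?case by (simp add: algebra_simps)
qed
lemma ge_pow0: "ge v x 0 \<Longrightarrow> ge v (x^k) 0" using ge_pow[of x 0 k] by simp
lemma ge_limit: "(\<And>N. ge v x N) \<Longrightarrow> x = 0"
  using ge_def by (metis add1_zle_eq order_less_irrefl)
lemma Oring_ge: "x \<in> Oring v \<longleftrightarrow> ge v x 0" by (simp add: Oring_def ge_def)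

lemma unit_ge: "is_unit v x \<Longrightarrow> ge v x 0" by (simp add: is_unit_def ge_def)
lemma unit_inv: "is_unit v x \<Longrightarrow> is_unit v (inverse x)" by (simp add: is_unit_def vinv)
lemma unit_mult: "is_unit v x \<Longrightarrow> is_unit v y \<Longrightarrow> is_unit v (x*y)" by (simp add: is_unit_def vmult)
lemma unit_div: "is_unit v x \<Longrightarrow> is_unit v y \<Longrightarrow> is_unit v (x/y)"
  by (simp add: divide_inverse unit_mult unit_inv)
lemma unit_pow: "is_unit v x \<Longrightarrow> is_unit v (x^n)" by (simp add: is_unit_def vpow)
lemma unit_neg: "is_unit v x \<Longrightarrow> is_unit v (-x)" by (simp add: is_unit_def vneg)
lemma unit_one: "is_unit v 1" by (simp add: is_unit_def v1)
lemma unit_iff: "is_unit v x \<longleftrightarrow> x \<noteq> 0 \<and> v x = 0" by (simp add: is_unit_def)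
lemma unit_nz: "is_unit v x \<Longrightarrow> x \<noteq> 0" by (simp add: is_unit_def)
lemma unit_inv_ge: "is_unit v x \<Longrightarrow> ge v (inverse x) 0" using unit_inv unit_ge by blast
lemma unit_add_small: assumes "is_unit v x" "ge v u 1" shows "is_unit v (x + u)"
proof (cases "u = 0")
  case True thus ?thesis using assms by simp
next
  case False
  hence vu: "1 \<le> v u" using assms by (simp add: ge_def)
  have x: "x \<noteq> 0" "v x = 0" using assms by (auto simp: is_unit_def)
  have nz: "x + u \<noteq> 0"
  proof
    assume "x + u = 0" hence "u = -x" by (simp add: eq_neg_iff_add_eq_0 add.commute)
    thus False using vu x vneg by simp
  qed
  have a: "0 \<le> v (x+u)" using vadd[OF x(1) False nz] x vu by simp
  have h1: "min (v (x+u)) (v (-u)) \<le> v x" using vadd[of "x+u" "-u"] nz False x(1) by simp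
  have vnu: "v (-u) = v u" by (rule vneg)
  have "\<not> 1 \<le> v (x+u)"
  proof
    assume "1 \<le> v (x+u)"
    then have "1 \<le> min (v (x+u)) (v (-u))" using vu vnu by simp
    with h1 x(2) show False by simp
  qed
  with a have "v (x+u) = 0" by simp
  thus ?thesis using nz by (simp add: is_unit_def)
qed

end

context dlf begin

lemma ge2: "ge v 2 1" using v2 two_nz by (simp add: ge_def)

lemma itr_ge: assumes "ge v c 1" shows "ge v (itr c n) 1"
proof (induction n)
  case 0 show ?case by simp
next
  case (Suc n)
  have "ge v ((itr c n)^2) (int 2 * 1)" by (rule ge_pow[OF Suc.IH])
  hence "ge v ((itr c n)^2) 1" by (rule ge_mono) simp
  thus ?case using assms by (simp add: ge_diff)
qed

lemma itr_step: assumes "ge v c 1" shows "ge v (itr c (Suc n) - itr c n) (int n + 1)"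
proof (induction n)
  case 0 show ?case using assms by simp
next
  case (Suc n)
  have e: "itr c (Suc (Suc n)) - itr c (Suc n) = - ((itr c (Suc n) - itr c n) * (itr c (Suc n) + itr c n))"
    by (simp add: power2_eq_square algebra_simps)
  have "ge v (itr c (Suc n) + itr c n) 1" using itr_ge[OF assms, of "Suc n"] itr_ge[OF assms, of n] by (rule ge_add)
  from ge_mult[OF Suc.IH this] show ?case unfolding e by simp
qed

lemma itr_diff: assumes "ge v c 1" "n \<le> m" shows "ge v (itr c m - itr c n) (int n + 1)"
  using assms(2)
proof (induction m rule: dec_induct)
  case base show ?case by simp
next
  case (step m)
  have a: "ge v (itr c (Suc m) - itr c m) (int n + 1)"
    using itr_step[OF assms(1), of m] step(1) by (elim ge_mono) simp
  have "itr c (Suc m) - itr c n = (itr c (Suc m) - itr c m) + (itr c m - itr c n)" by simp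
  thus ?case using ge_add[OF a step(3)] by (simp del: itr.simps)
qed

lemma AS: assumes c: "ge v c 1" shows "\<exists>y. ge v y 1 \<and> y^2 + y = c"
proof -
  define a where "a = itr c"
  have cauchy: "\<forall>N::int. \<exists>M. \<forall>m\<ge>M. \<forall>n\<ge>M. a m = a n \<or> N \<le> v (a m - a n)"
  proof
    fix N :: int
    show "\<exists>M. \<forall>m\<ge>M. \<forall>n\<ge>M. a m = a n \<or> N \<le> v (a m - a n)"
    proof (intro exI allI impI)
      fix m n assume mn: "nat N \<le> m" "nat N \<le> n"
      show "a m = a n \<or> N \<le> v (a m - a n)"
      proof (cases "n \<le> m")
        case True
        have "ge v (a m - a n) (int n + 1)" unfolding a_def by (rule itr_diff[OF c True])
        thus ?thesis using mn by (auto simp: ge_def)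
      next
        case False
        have "ge v (a n - a m) (int m + 1)" unfolding a_def by (rule itr_diff[OF c]) (use False in simp)
        hence "ge v (a m - a n) (int m + 1)" using ge_neg[of "a n - a m"] by simp
        thus ?thesis using mn by (auto simp: ge_def)
      qed
    qed
  qed
  obtain l where l: "\<forall>N::int. \<exists>M. \<forall>n\<ge>M. a n = l \<or> N \<le> v (a n - l)"
    using complete[OF cauchy] by blast
  have conv: "\<exists>M. \<forall>n\<ge>M. ge v (l - a n) N" for N
  proof -
    obtain M where "\<forall>n\<ge>M. a n = l \<or> N \<le> v (a n - l)" using l by blast
    hence "\<forall>n\<ge>M. ge v (a n - l) N" by (auto simp: ge_def)
    hence "\<forall>n\<ge>M. ge v (l - a n) N" using ge_neg by (metis minus_diff_eq)
    thus ?thesis by blast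
  qed
  have l1: "ge v l 1"
  proof -
    obtain M where M: "\<forall>n\<ge>M. ge v (l - a n) 1" using conv by blast
    have "ge v (l - a M) 1" using M by simp
    moreover have "ge v (a M) 1" unfolding a_def by (rule itr_ge[OF c])
    ultimately have "ge v ((l - a M) + a M) 1" by (rule ge_add)
    thus ?thesis by simp
  qed
  have "l^2 + l - c = 0"
  proof (rule ge_limit)
    fix N :: int
    obtain M where M: "\<forall>n\<ge>M. ge v (l - a n) (max N 1)" using conv by blast
    have e: "l^2 + l - c = (l - a (Suc M)) + (l - a M) * (l + a M)"
      unfolding a_def by (simp add: power2_eq_square algebra_simps)
    have g1: "ge v (l - a (Suc M)) (max N 1)" using M by simp
    have g2: "ge v (l - a M) (max N 1)" using M by simp
    have g3: "ge v (l + a M) 0" using l1 itr_ge[OF c, of M] unfolding a_def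
      by (intro ge_add) (auto elim: ge_mono)
    have "ge v (l^2 + l - c) (max N 1)" unfolding e
      by (rule ge_add[OF g1 ge_mult0'[OF g2 g3]])
    thus "ge v (l^2 + l - c) N" by (rule ge_mono) simp
  qed
  hence "l^2 + l = c" by simp
  with l1 show ?thesis by blast
qed

lemma sq_inj: assumes x: "ge v x 0" and y: "ge v y 0" and d: "ge v (x^2 - y^2) 1"
  shows "ge v (x - y) 1"
proof -
  have e: "(x-y)^2 = (x^2 - y^2) - 2*y*(x-y)" by (simp add: power2_eq_square algebra_simps)
  have "ge v (2*y) (1+0)" by (rule ge_mult[OF ge2 y])
  hence "ge v (2*y*(x-y)) (1+0)" using ge_mult[of "2*y" 1 "x-y" 0] ge_diff[OF x y] by simp
  hence "ge v ((x-y)^2) 1" unfolding e using d by (simp add: ge_diff)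
  thus ?thesis
  proof (cases "x - y = 0")
    case False
    hence "v ((x-y)^2) = 2 * v (x-y)" by (simp add: vpow)
    thus ?thesis using \<open>ge v ((x-y)^2) 1\<close> False by (auto simp: ge_def)
  qed simp
qed

lemma frob: assumes t: "ge v t 0" shows "\<exists>b. ge v b 0 \<and> ge v (b^2 - t) 1"
proof -
  obtain R where R: "finite R" "R \<subseteq> Oring v" and cov: "\<forall>x\<in>Oring v. \<exists>r\<in>R. x = r \<or> 1 \<le> v (x - r)"
    using finres by blast
  define Oset where "Oset = {x. ge v x 0}"
  define cls where "cls x = {y \<in> Oset. ge v (y - x) 1}" for x
  define S where "S X = {y \<in> Oset. \<exists>x\<in>X. ge v (y - x^2) 1}" for X
  have clseq: "cls a = cls b" if "ge v (a - b) 1" for a b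
  proof -
    have "ge v (y - a) 1 \<longleftrightarrow> ge v (y - b) 1" for y
    proof
      assume "ge v (y - a) 1" from ge_add[OF this that] show "ge v (y - b) 1" by simp
    next
      assume "ge v (y - b) 1" from ge_diff[OF this that] show "ge v (y - a) 1" by simp
    qed
    thus ?thesis unfolding cls_def by auto
  qed
  have RO: "r \<in> Oset" if "r \<in> R" for r using R(2) that unfolding Oset_def by (auto simp: Oring_ge)
  have cov': "\<exists>r\<in>R. cls x = cls r" if xO: "x \<in> Oset" for x
  proof -
    have "x \<in> Oring v" using xO by (simp add: Oset_def Oring_ge)
    then obtain r where r: "r \<in> R" "x = r \<or> 1 \<le> v (x - r)" using cov by blast
    hence "ge v (x - r) 1" by (auto simp: ge_def)
    thus ?thesis using clseq r(1) by blast
  qed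
  have self: "x \<in> cls x" if "x \<in> Oset" for x using that unfolding cls_def by simp
  have sqO: "x^2 \<in> Oset" if "x \<in> Oset" for x using that ge_pow0 unfolding Oset_def by auto
  have Scls: "S (cls x) = cls (x^2)" if x: "x \<in> Oset" for x
  proof
    show "S (cls x) \<subseteq> cls (x^2)"
    proof
      fix y assume "y \<in> S (cls x)"
      then obtain z where y: "y \<in> Oset" and z: "z \<in> Oset" "ge v (z - x) 1" and yz: "ge v (y - z^2) 1"
        unfolding S_def cls_def by blast
      have e: "y - x^2 = (y - z^2) + (z - x) * (z + x)" by (simp add: power2_eq_square algebra_simps)
      have "ge v (z + x) 0" using z x unfolding Oset_def by (simp add: ge_add)
      hence "ge v (y - x^2) 1" unfolding e using ge_add[OF yz ge_mult0'[OF z(2)]] by blast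
      thus "y \<in> cls (x^2)" using y unfolding cls_def by blast
    qed
  next
    show "cls (x^2) \<subseteq> S (cls x)" using self[OF x] unfolding S_def cls_def by blast
  qed
  define C where "C = cls ` R"
  have sub: "S ` C \<subseteq> C"
  proof
    fix X assume "X \<in> S ` C"
    then obtain r where r: "r \<in> R" "X = S (cls r)" unfolding C_def by blast
    hence "X = cls (r^2)" using Scls RO by simp
    thus "X \<in> C" using cov'[OF sqO[OF RO[OF r(1)]]] unfolding C_def by auto
  qed
  have inj: "inj_on S C"
  proof (rule inj_onI)
    fix X Y assume "X \<in> C" "Y \<in> C" "S X = S Y"
    then obtain r1 r2 where r: "r1 \<in> R" "r2 \<in> R" "X = cls r1" "Y = cls r2" and
      e: "cls (r1^2) = cls (r2^2)" using Scls RO unfolding C_def by auto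
    have "r1^2 \<in> cls (r2^2)" using e self[OF sqO[OF RO[OF r(1)]]] by simp
    hence "ge v (r1^2 - r2^2) 1" unfolding cls_def by simp
    hence "ge v (r1 - r2) 1" using sq_inj RO r unfolding Oset_def by blast
    thus "X = Y" using clseq r by simp
  qed
  have "finite C" unfolding C_def using R(1) by simp
  hence SC: "S ` C = C" using endo_inj_surj sub inj by blast
  have tO: "t \<in> Oset" using t unfolding Oset_def by simp
  obtain r0 where "r0 \<in> R" "cls t = cls r0" using cov'[OF tO] by blast
  hence "cls t \<in> S ` C" using SC unfolding C_def by auto
  then obtain r where r: "r \<in> R" "cls t = S (cls r)" unfolding C_def by blast
  hence "cls t = cls (r^2)" using Scls RO by simp
  hence "t \<in> cls (r^2)" using self[OF tO] by simp
  hence "ge v (t - r^2) 1" unfolding cls_def by simp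
  hence "ge v (r^2 - t) 1" using ge_neg by (metis minus_diff_eq)
  moreover have "ge v r 0" using RO[OF r(1)] unfolding Oset_def by simp
  ultimately show ?thesis by blast
qed

lemma norm_rep: assumes rho: "is_unit v \<rho>" and w: "is_unit v w"
  shows "\<exists>\<alpha> \<beta>. ge v \<alpha> 0 \<and> ge v \<beta> 0 \<and> \<alpha>^2 + \<alpha>*\<beta> + \<rho>*\<beta>^2 = w"
proof -
  have t: "ge v (w/\<rho>) 0" using unit_div[OF w rho] unit_ge by blast
  obtain b where b: "ge v b 0" "ge v (b^2 - w/\<rho>) 1" using frob[OF t] by blast
  have rnz: "\<rho> \<noteq> 0" using rho unit_nz by blast
  have "is_unit v (w/\<rho> + (b^2 - w/\<rho>))" by (rule unit_add_small[OF unit_div[OF w rho] b(2)])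
  hence ub2: "is_unit v (b^2)" by simp
  hence bnz: "b \<noteq> 0" by (auto simp: is_unit_def)
  have "ge v (\<rho> * (b^2 - w/\<rho>)) (0 + 1)" by (rule ge_mult[OF unit_ge[OF rho] b(2)])
  hence "ge v (\<rho>*b^2 - w) 1" using rnz by (simp add: algebra_simps)
  hence "ge v (w - \<rho>*b^2) 1" using ge_neg by (metis minus_diff_eq)
  hence "ge v ((w - \<rho>*b^2) * inverse (b^2)) (1 + 0)"
    by (rule ge_mult[OF _ unit_inv_ge[OF ub2]])
  then obtain y where y: "ge v y 1" "y^2 + y = (w - \<rho>*b^2) * inverse (b^2)"
    using AS by fastforce
  have "(b*y)^2 + (b*y)*b + \<rho>*b^2 = b^2 * (y^2 + y) + \<rho>*b^2" by (simp add: power2_eq_square algebra_simps)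
  also have "\<dots> = w" using y(2) bnz by (simp add: field_simps)
  finally have "(b*y)^2 + (b*y)*b + \<rho>*b^2 = w" .
  moreover have "ge v (b*y) 0" using ge_mult[OF b(1) ge_mono[OF y(1)]] by simp
  ultimately show ?thesis using b(1) by blast
qed

end

definition bN :: "'a::comm_ring_1 \<Rightarrow> 'a \<Rightarrow> 'a \<Rightarrow> 'a \<Rightarrow> 'a \<Rightarrow> 'a" where
  "bN \<rho> a b a' b' = 2*a*a' + a*b' + b*a' + 2*\<rho>*b*b'"

lemma bN_mult: "bN \<rho> (a*a' - \<rho>*b*b') (a*b' + b*a' + b*b') (a*a'' - \<rho>*b*b'') (a*b'' + b*a'' + b*b'')
   = (a^2 + a*b + \<rho>*b^2) * bN \<rho> a' b' a'' b''"
  unfolding bN_def by (simp add: algebra_simps power2_eq_square)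

lemma B0: assumes "(2::'a::field) \<noteq> 0"
  shows "Bf (gram_lhs \<pi> \<rho> \<delta>) x y = \<pi>/2 * bN \<rho> (x$1) (x$2) (y$1) (y$2) + (1-4*\<rho>)*\<delta>*(x$3)*(y$3)"
  unfolding Bf_def gram_lhs_def bN_def using assms by (simp add: sum_3 field_simps)

lemma Bf_add1: "Bf G (x+y) z = Bf G x z + Bf G y z"
  unfolding Bf_def by (simp add: sum.distrib distrib_right)
lemma Bf_add2: "Bf G z (x+y) = Bf G z x + Bf G z y"
  unfolding Bf_def by (simp add: sum.distrib distrib_left)
lemma Bf_smult1: "Bf G (k *s x) z = k * Bf G x z"
  unfolding Bf_def by (simp add: sum_distrib_left mult.assoc)
lemma Bf_smult2: "Bf G z (k *s x) = k * Bf G z x"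
  unfolding Bf_def by (simp add: sum_distrib_left algebra_simps)
lemma Bf_diff1: "Bf G (x-y) z = Bf G x z - Bf G y z"
  unfolding Bf_def by (simp add: sum_subtractf left_diff_distrib)
lemma Bf_diff2: "Bf G z (x-y) = Bf G z x - Bf G z y"
  unfolding Bf_def by (simp add: sum_subtractf right_diff_distrib)
lemma Bf_zero2: "Bf G z 0 = 0" unfolding Bf_def by simp
lemma Bf_sym: assumes "symm G" shows "Bf G x y = Bf G y x"
proof -
  have "Bf G x y = (\<Sum>j\<in>UNIV. \<Sum>i\<in>UNIV. x$i * G$i$j * y$j)" unfolding Bf_def by (rule sum.swap)
  also have "\<dots> = Bf G y x" unfolding Bf_def using assms unfolding symm_def
    by (intro sum.cong refl) (simp add: ac_simps)
  finally show ?thesis .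
qed

lemma orth3:
  fixes x1 x2 x3 y :: "'a::field^3"
  assumes sy: "symm G" and o12: "Bf G x1 x2 = 0" and o13: "Bf G x1 x3 = 0" and o23: "Bf G x2 x3 = 0"
    and n1: "Qf G x1 \<noteq> 0" and n2: "Qf G x2 \<noteq> 0" and n3: "Qf G x3 \<noteq> 0"
  shows "y = (Bf G x1 y / Qf G x1) *s x1 + (Bf G x2 y / Qf G x2) *s x2 + (Bf G x3 y / Qf G x3) *s x3"
proof -
  have sym: "Bf G a b = Bf G b a" for a b using Bf_sym[OF sy] .
  have o21: "Bf G x2 x1 = 0" and o31: "Bf G x3 x1 = 0" and o32: "Bf G x3 x2 = 0"
    using o12 o13 o23 sym by metis+
  have c1: "Bf G x1 (k1 *s x1 + k2 *s x2 + k3 *s x3) = k1 * Qf G x1" for k1 k2 k3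
    by (simp add: Bf_add2 Bf_smult2 o12 o13 Qf_def)
  have c2: "Bf G x2 (k1 *s x1 + k2 *s x2 + k3 *s x3) = k2 * Qf G x2" for k1 k2 k3
    by (simp add: Bf_add2 Bf_smult2 o21 o23 Qf_def)
  have c3: "Bf G x3 (k1 *s x1 + k2 *s x2 + k3 *s x3) = k3 * Qf G x3" for k1 k2 k3
    by (simp add: Bf_add2 Bf_smult2 o31 o32 Qf_def)
  have sp2: "\<exists>k2 k3. u = k2 *s x2 + k3 *s x3" if "u \<in> vec.span {x2, x3}" for u
  proof -
    have "u \<in> {x. \<exists>k. x - k *s x2 \<in> vec.span {x3}}" using that vec.span_insert[of x2 "{x3}"] by simp
    then obtain k2 where "u - k2 *s x2 \<in> vec.span {x3}" by blast
    hence "u - k2 *s x2 \<in> range (\<lambda>k. k *s x3)" using vec.span_singleton[of x3] by simp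
    then obtain k3 where "u - k2 *s x2 = k3 *s x3" by blast
    hence "u = k2 *s x2 + k3 *s x3" by (simp add: algebra_simps)
    thus ?thesis by blast
  qed
  have sp3: "\<exists>k1 k2 k3. u = k1 *s x1 + k2 *s x2 + k3 *s x3" if "u \<in> vec.span {x1, x2, x3}" for u
  proof -
    have "u \<in> {x. \<exists>k. x - k *s x1 \<in> vec.span {x2, x3}}" using that vec.span_insert[of x1 "{x2, x3}"] by simp
    then obtain k1 where "u - k1 *s x1 \<in> vec.span {x2, x3}" by blast
    then obtain k2 k3 where "u - k1 *s x1 = k2 *s x2 + k3 *s x3" using sp2 by blast
    hence "u = k1 *s x1 + k2 *s x2 + k3 *s x3" by (simp add: algebra_simps)
    thus ?thesis by blast
  qed
  have x3nz: "x3 \<noteq> 0" using n3 by (auto simp: Qf_def Bf_def)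
  have i1: "vec.independent {x3}" using x3nz vec.dependent_single by blast
  have x2n: "x2 \<notin> vec.span {x3}"
  proof
    assume "x2 \<in> vec.span {x3}"
    hence "x2 \<in> range (\<lambda>k. k *s x3)" using vec.span_singleton[of x3] by simp
    then obtain k where "x2 = k *s x3" by blast
    hence "Qf G x2 = k * Bf G x3 x2" unfolding Qf_def by (simp add: Bf_smult1)
    thus False using o32 n2 by simp
  qed
  have i2: "vec.independent {x2, x3}" using vec.independent_insertI[OF x2n i1] .
  have x1n: "x1 \<notin> vec.span {x2, x3}"
  proof
    assume "x1 \<in> vec.span {x2, x3}"
    then obtain k2 k3 where "x1 = k2 *s x2 + k3 *s x3" using sp2 by blast
    hence "Qf G x1 = Bf G x1 (0 *s x1 + k2 *s x2 + k3 *s x3)" unfolding Qf_def by simp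
    also have "\<dots> = 0 * Qf G x1" by (rule c1)
    finally show False using n1 by simp
  qed
  have i3: "vec.independent {x1, x2, x3}" using vec.independent_insertI[OF x1n i2] .
  have d12: "x1 \<noteq> x2" using o12 n1 by (auto simp: Qf_def)
  have d13: "x1 \<noteq> x3" using o13 n1 by (auto simp: Qf_def)
  have d23: "x2 \<noteq> x3" using o23 n2 by (auto simp: Qf_def)
  have card: "card {x1, x2, x3} = 3" using d12 d13 d23 by simp
  have dimeq: "vec.dim (UNIV :: ('a^3) set) = CARD(3)" by (rule vec_dim_card)
  have "vec.dim (UNIV :: ('a^3) set) \<le> card {x1, x2, x3}" unfolding dimeq card by simp
  hence "UNIV \<subseteq> vec.span {x1, x2, x3}" using vec.card_ge_dim_independent[OF _ i3] by blast
  then obtain k1 k2 k3 where y: "y = k1 *s x1 + k2 *s x2 + k3 *s x3" using sp3 by blast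
  have "Bf G x1 y / Qf G x1 = k1" "Bf G x2 y / Qf G x2 = k2" "Bf G x3 y / Qf G x3 = k3"
    using n1 n2 n3 unfolding y c1 c2 c3 by simp_all
  thus ?thesis using y by simp
qed


context dlf begin

lemma ge_sum: fixes n :: nat shows "(\<And>i. i < n \<Longrightarrow> ge v (f i) N) \<Longrightarrow> ge v (\<Sum>i<n. f i) N"
proof (induction n)
  case 0 show ?case by simp
next
  case (Suc n)
  have "ge v ((\<Sum>i<n. f i) + f n) N" using Suc by (intro ge_add) auto
  thus ?case by simp
qed

lemma pid_oideal: assumes aS: "a \<in> S" and a0: "a \<noteq> 0" and S: "\<And>s. s \<in> S \<Longrightarrow> ge v (s/a) 0"
  shows "pid v a = oideal v S"
proof
  show "pid v a \<subseteq> oideal v S"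
  proof
    fix y assume "y \<in> pid v a"
    then obtain c where c: "c \<in> Oring v" "y = c * a" unfolding pid_def by blast
    have "\<exists>(n::nat) c' s'. (\<forall>i<n. c' i \<in> Oring v \<and> s' i \<in> S) \<and> y = (\<Sum>i<n. c' i * s' i)"
      by (intro exI[of _ "1::nat"] exI[of _ "\<lambda>_. c"] exI[of _ "\<lambda>_. a"]) (use c aS in simp)
    thus "y \<in> oideal v S" unfolding oideal_def by simp
  qed
next
  show "oideal v S \<subseteq> pid v a"
  proof
    fix y assume "y \<in> oideal v S"
    hence "\<exists>(n::nat) c s. (\<forall>i<n. c i \<in> Oring v \<and> s i \<in> S) \<and> y = (\<Sum>i<n. c i * s i)"
      unfolding oideal_def by simp
    then obtain n :: nat and c s where cs: "\<forall>i<n. c i \<in> Oring v \<and> s i \<in> S" and y: "y = (\<Sum>i<n. c i * s i)"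
      by blast
    have "ge v (\<Sum>i<n. c i * (s i / a)) 0"
    proof (rule ge_sum)
      fix i assume "i < n"
      hence "ge v (c i) 0" "ge v (s i / a) 0" using cs S by (auto simp: Oring_ge)
      thus "ge v (c i * (s i / a)) 0" using ge_mult0 by blast
    qed
    moreover have "(\<Sum>i<n. c i * (s i / a)) * a = y" unfolding y using a0
      by (simp add: sum_distrib_right)
    ultimately show "y \<in> pid v a" unfolding pid_def by (auto simp: Oring_ge)
  qed
qed

end

lemma bN_sym: "bN \<rho> a b a' b' = bN \<rho> a' b' a b" unfolding bN_def by (simp add: algebra_simps)
lemma bN_scale2: "bN \<rho> a b (k*a') (k*b') = k * bN \<rho> a b a' b'" unfolding bN_def by (simp add: algebra_simps)
lemma bN_diag: "bN \<rho> a b a b = 2*(a^2 + a*b + \<rho>*b^2)" unfolding bN_def by (simp add: algebra_simps power2_eq_square)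


lemma Qx2_poly:
  fixes g \<rho> \<delta> s \<pi> m nu x c w a1 k :: "'a::field"
  assumes nz: "g \<noteq> 0" 
   and four: "nu^2*\<pi>*m = 4"
   and c: "c * ((1 - 4*\<rho>)*g) = -4*\<rho>^2"
   and w: "w * (g*\<pi>) = 4*\<rho>*\<delta>*(1+g)"
   and a1: "a1 * g = \<delta>*(g+4*\<rho>)"
   and k: "k * w = nu*a1* s*(1+g)"
  shows "k^2*(\<pi>*w*(c+\<rho>)*4*a1 - \<pi>^2*w^2*(4*c+1))*m = - 4*a1*a1*(s^2*(1+g))*\<pi>"
  using assms by algebra

lemma bN_mult1: "bN \<rho> a b (a*a'' - \<rho>*b*b'') (a*b'' + b*a'' + b*b'') = (a^2+a*b+\<rho>*b^2) * bN \<rho> 1 0 a'' b''"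
  unfolding bN_def by (simp add: algebra_simps power2_eq_square)

lemma bN_scale1: "bN \<rho> (k*a) (k*b) a' b' = k * bN \<rho> a b a' b'" unfolding bN_def by (simp add: algebra_simps)

lemma vec3_diff: "(vector [a,b,c] :: 'a::comm_ring_1^3) - k *s vector [a',b',c'] = vector [a - k*a', b - k*b', c - k*c']"
  by (simp add: vec_eq_iff forall_3)

lemma Qf_lin: assumes "symm G"
  shows "Qf G (a *s x + b *s y) = a^2 * Qf G x + 2*a*b*Bf G x y + b^2 * Qf G y"
proof -
  have s: "Bf G y x = Bf G x y" using Bf_sym[OF assms] .
  show ?thesis unfolding Qf_def by (simp add: Bf_add1 Bf_add2 Bf_smult1 Bf_smult2 s power2_eq_square algebra_simps)
qed


theorem lemma3p9:
  fixes v :: "'a::field \<Rightarrow> int" and \<pi> \<rho> \<kappa> \<delta> r s :: 'a and e :: nat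
  assumes F: "dyadic_local_field v"
    and unif: "\<pi> \<noteq> 0" "v \<pi> = 1"
    and e_def: "e = nat (v 2)"
    and rho: "is_unit v \<rho>" "qdefect v (1 - 4 * \<rho>) = pid v 4"
    and kappa: "is_unit v \<kappa>" "ideal_ord v ((\<lambda>y. inverse \<kappa> * y) ` qdefect v \<kappa>) (2 * int e - 1)"
    and delta: "is_unit v \<delta>"
    and rs: "is_unit v r" "is_unit v s" "\<kappa> = s^2 * (1 + r * \<pi> ^ (2 * e - 1))"
  shows "\<exists>(G :: 'a^3^3) M \<sigma> x1 x2 x3.
           symm G \<and> bong v G [x1, x2, x3] M \<and>
           Qf G x1 = \<delta> * kappa_sharp \<rho> r \<pi> e \<and>
           Qf G x2 = - \<delta> * kappa_sharp \<rho> r \<pi> e * \<kappa> * (\<pi>^2 / \<pi>^(2 * e)) \<and>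
           Qf G x3 = \<delta> * \<kappa> \<and>
           lattice_iso (gram_lhs \<pi> \<rho> \<delta>) G \<sigma> (stdlat v) M"
proof -
  interpret dlf v by unfold_locales (rule F)
  have two: "(2::'a) \<noteq> 0" by (rule two_nz)
  have ve: "v 2 = int e" using v2 e_def by simp
  have e1: "1 \<le> e" using v2 e_def by simp
  have pinz: "\<pi> \<noteq> 0" and vpi: "v \<pi> = 1" using unif by auto
  define P where "P = \<pi>^e"
  define m where "m = \<pi>^(2*e-1)"
  have Pnz: "P \<noteq> 0" unfolding P_def using pinz by simp
  have mnz: "m \<noteq> 0" unfolding m_def using pinz by simp
  have vP: "v P = int e" unfolding P_def using pinz vpi by (simp add: vpow)
  have vm: "v m = 2*int e - 1" unfolding m_def using pinz vpi e1 by (simp add: vpow of_nat_diff)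
  have pe: "\<pi>^(2*e) = \<pi>*m"
  proof -
    have "Suc (2*e-1) = 2*e" using e1 by simp
    hence "\<pi>^(2*e) = \<pi>^(Suc (2*e-1))" by simp
    thus ?thesis unfolding m_def by simp
  qed
  have Pm: "\<pi>*m = P^2" unfolding P_def pe[symmetric] by (simp add: power_mult[symmetric] mult.commute)
  define nu where "nu = 2/P"
  have nunz: "nu \<noteq> 0" unfolding nu_def using two Pnz by simp
  have unu: "is_unit v nu" unfolding is_unit_def nu_def using two Pnz by (simp add: vdiv ve vP)
  have four: "nu^2*\<pi>*m = 4"
  proof -
    have "nu^2*\<pi>*m = nu^2*(\<pi>*m)" by (simp add: ac_simps)
    also have "\<dots> = (2/P)^2*P^2" by (simp add: nu_def Pm)
    also have "\<dots> = 4" using Pnz by (simp add: power_divide)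
    finally show ?thesis .
  qed
  have four_nz: "(4::'a) \<noteq> 0" using four nunz pinz mnz by (metis mult_eq_0_iff power_not_zero)
  have eight_nz: "(8::'a) \<noteq> 0"
  proof -
    have e: "(8::'a) = 2*4" by simp
    show ?thesis using e two four_nz by (metis mult_eq_0_iff)
  qed
  have sixteen_nz: "(16::'a) \<noteq> 0"
  proof -
    have e: "(16::'a) = 4*4" by simp
    show ?thesis using e four_nz by (metis mult_eq_0_iff)
  qed
  have gpi: "ge v \<pi> 1" using vpi by (simp add: ge_def)
  have gm: "ge v m 1" using vm e1 by (simp add: ge_def)
  have gm2: "ge v (m/2) 0" using mnz two vm ve e1 by (simp add: ge_def vdiv)
  have gmpi: "ge v (m/\<pi>) 0" using mnz pinz vm vpi e1 by (simp add: ge_def vdiv)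
  have gpm4: "ge v (\<pi>*m/4) 0"
  proof -
    have "\<pi>*m/4 = \<pi>*m/(nu^2*\<pi>*m)" by (simp add: four)
    also have "\<dots> = inverse (nu^2)" using pinz mnz nunz by (simp add: field_simps)
    finally have eq: "\<pi>*m/4 = inverse (nu^2)" .
    show ?thesis unfolding eq by (rule unit_inv_ge[OF unit_pow[OF unu]])
  qed
  have rnz: "r \<noteq> 0" and snz: "s \<noteq> 0" and rhonz: "\<rho> \<noteq> 0" and dnz: "\<delta> \<noteq> 0" and kapnz: "\<kappa> \<noteq> 0"
    using rs rho delta kappa by (auto simp: is_unit_def)
  have gr: "ge v r 0" and gs: "ge v s 0" and grho: "ge v \<rho> 0" and gdel: "ge v \<delta> 0" and gnu: "ge v nu 0"
    using rs rho delta unu unit_ge by auto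
  have gir: "ge v (inverse r) 0" and girho: "ge v (inverse \<rho>) 0"
    using rs rho unit_inv_ge by auto
  define g where "g = r*m"
  have gg: "ge v g 1" unfolding g_def using ge_mult[OF gr gm] by simp
  have gnz: "g \<noteq> 0" using rnz mnz g_def by simp
  define h where "h = 1 + g"
  have uh: "is_unit v h" unfolding h_def by (rule unit_add_small[OF unit_one gg])
  have hnz: "h \<noteq> 0" using uh unit_nz by blast
  have kap: "\<kappa> = s^2*h" using rs(3) unfolding h_def g_def m_def .
  define \<Delta> where "\<Delta> = 1 - 4*\<rho>"
  have g4r: "ge v (4*\<rho>) 1"
  proof -
    have "ge v (nu^2*\<rho>*\<pi>*m) (0+1+1)" using ge_mult[OF ge_mult[OF ge_mult0[OF ge_pow0[OF gnu] grho] gpi] gm] by simp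
    moreover have "nu^2*\<rho>*\<pi>*m = 4*\<rho>" using four by (simp add: ac_simps)
    ultimately show ?thesis using ge_mono by fastforce
  qed
  have uD: "is_unit v \<Delta>" unfolding \<Delta>_def using unit_add_small[OF unit_one, of "-(4*\<rho>)"] g4r by simp
  have Dnz: "\<Delta> \<noteq> 0" using uD unit_nz by blast
  have giD: "ge v (inverse \<Delta>) 0" using uD unit_inv_ge by blast
  define ks where "ks = kappa_sharp \<rho> r \<pi> e"
  have ks_eq: "ks = 1 + 4*\<rho>/g" unfolding ks_def kappa_sharp_def g_def m_def using rnz mnz
    by (simp add: divide_inverse ac_simps)
  have ks_eq2: "ks = 1 + nu^2*\<pi>*\<rho>*inverse r"
  proof -
    have "4*\<rho>/g = nu^2*\<pi>*m*\<rho>/(r*m)" unfolding g_def four ..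
    also have "\<dots> = nu^2*\<pi>*\<rho>*inverse r" using mnz rnz by (simp add: field_simps)
    finally show ?thesis unfolding ks_eq by simp
  qed
  have uks: "is_unit v ks"
  proof -
    have "ge v (nu^2*\<rho>*inverse r*\<pi>) (0+1)" using ge_mult[OF ge_mult0[OF ge_mult0[OF ge_pow0[OF gnu] grho] gir] gpi] by simp
    hence "ge v (nu^2*\<pi>*\<rho>*inverse r) 1" by (simp add: ac_simps)
    thus ?thesis unfolding ks_eq2 by (rule unit_add_small[OF unit_one])
  qed
  define a1 where "a1 = \<delta>*ks"
  have ua1: "is_unit v a1" unfolding a1_def by (rule unit_mult[OF delta uks])
  have a1nz: "a1 \<noteq> 0" using ua1 unit_nz by blast
  define a3 where "a3 = \<delta>*\<kappa>"
  have ua3: "is_unit v a3" unfolding a3_def by (rule unit_mult[OF delta kappa(1)])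
  have a3nz: "a3 \<noteq> 0" using ua3 unit_nz by blast
  define a2 where "a2 = - \<delta> * ks * \<kappa> * (\<pi>^2 / \<pi>^(2 * e))"
  have a2_eq: "a2 = -(a1*\<kappa>*\<pi>/m)" unfolding a2_def pe a1_def using pinz mnz by (simp add: field_simps power2_eq_square)
  have a2nz: "a2 \<noteq> 0" unfolding a2_eq using a1nz kapnz pinz mnz by simp
  define w where "w = nu^2*\<rho>*\<delta>*h*inverse r"
  have uw: "is_unit v w" unfolding w_def
    by (intro unit_mult unit_pow unit_inv unu rho(1) delta uh rs(1))
  have wnz: "w \<noteq> 0" using uw unit_nz by blast
  have w_g: "w*(g*\<pi>) = 4*\<rho>*\<delta>*(1+g)"
  proof -
    have "w*(g*\<pi>) = (nu^2*\<pi>*m)*\<rho>*\<delta>*h*(inverse r * r)" unfolding w_def g_def by (simp add: ac_simps)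
    also have "\<dots> = 4*\<rho>*\<delta>*(1+g)" unfolding four h_def using rnz by simp
    finally show ?thesis .
  qed
  obtain \<alpha> \<beta> where ab: "ge v \<alpha> 0" "ge v \<beta> 0" "\<alpha>^2 + \<alpha>*\<beta> + \<rho>*\<beta>^2 = w"
    using norm_rep[OF rho(1) uw] by blast
  define c where "c = -(nu^2*\<pi>*\<rho>^2)*inverse \<Delta>*inverse r"
  have gc: "ge v c 1"
  proof -
    have "ge v (nu^2*\<rho>^2*inverse \<Delta>*inverse r*\<pi>) (0+1)"
      using ge_mult[OF ge_mult0[OF ge_mult0[OF ge_mult0[OF ge_pow0[OF gnu] ge_pow0[OF grho]] giD] gir] gpi] by simp
    thus ?thesis unfolding c_def by (simp add: ac_simps)
  qed
  have c_g: "c*((1-4*\<rho>)*g) = -4*\<rho>^2"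
  proof -
    have "c*((1-4*\<rho>)*g) = -(nu^2*\<pi>*m)*\<rho>^2*(inverse \<Delta>*\<Delta>)*(inverse r*r)"
      unfolding c_def g_def \<Delta>_def[symmetric] by (simp add: ac_simps)
    also have "\<dots> = -4*\<rho>^2" unfolding four using rnz Dnz by simp
    finally show ?thesis .
  qed
  obtain y0 where y0: "ge v y0 1" "y0^2 + y0 = c" using AS[OF gc] by blast
  define x where "x = -y0"
  have X: "x^2 - x = c" using y0(2) unfolding x_def by (simp add: power2_eq_square)
  have gx: "ge v x 0" using y0(1) unfolding x_def by (simp add: ge_mono)
  have a1_g: "a1*g = \<delta>*(g+4*\<rho>)" unfolding a1_def ks_eq using gnz by (simp add: field_simps)
  define k where "k = nu*a1* s*h*inverse w"
  have k_w: "k*w = nu*a1* s*(1+g)" using wnz unfolding k_def h_def by simp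
  have gk: "ge v k 0" unfolding k_def
    using ge_mult0[OF ge_mult0[OF ge_mult0[OF ge_mult0[OF gnu unit_ge[OF ua1]] gs] unit_ge[OF uh]] unit_inv_ge[OF uw]]
    by simp
  define p where "p = \<alpha>*(k*x) - \<rho>*\<beta>*(-k)"
  define q where "q = \<alpha>*(-k) + \<beta>*(k*x) + \<beta>*(-k)"
  have gp: "ge v p 0" unfolding p_def using ab gk gx grho
    by (intro ge_diff ge_mult0) (auto intro: ge_mult0 simp: ge_neg)
  have gq: "ge v q 0" unfolding q_def using ab gk gx
    by (intro ge_add ge_mult0) (auto intro: ge_mult0 simp: ge_neg)
  define G0 where "G0 = gram_lhs \<pi> \<rho> \<delta>"
  have B: "Bf G0 a b = \<pi>/2 * bN \<rho> (a$1) (a$2) (b$1) (b$2) + \<Delta>*\<delta>*(a$3)*(b$3)" for a b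
    unfolding G0_def \<Delta>_def by (rule B0[OF two])
  have symG: "symm G0" unfolding symm_def G0_def gram_lhs_def by (simp add: forall_3)
  have Bs: "Bf G0 a b = Bf G0 b a" for a b by (rule Bf_sym[OF symG])
  define x1 where "x1 = (vector [\<alpha>, \<beta>, 1] :: 'a^3)"
  define z where "z = (vector [p, q, 0] :: 'a^3)"
  have Qx1: "Qf G0 x1 = a1"
  proof -
    have "Qf G0 x1 = \<pi>/2 * bN \<rho> \<alpha> \<beta> \<alpha> \<beta> + \<Delta>*\<delta>" unfolding Qf_def B x1_def by simp
    also have "\<dots> = \<pi>*w + \<Delta>*\<delta>" unfolding bN_diag ab(3) using two by simp
    also have "\<dots> = a1"
    proof -
      have "(\<pi>*w + \<Delta>*\<delta>)*g = w*(g*\<pi>) + \<Delta>*\<delta>*g" by (simp add: algebra_simps)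
      also have "\<dots> = 4*\<rho>*\<delta>*(1+g) + (1-4*\<rho>)*\<delta>*g" unfolding w_g \<Delta>_def ..
      also have "\<dots> = a1*g" unfolding a1_g by (simp add: algebra_simps)
      finally show ?thesis using gnz by simp
    qed
    finally show ?thesis .
  qed
  have Bx1z: "Bf G0 x1 z = \<pi>/2 * w * (2*k*x - k)"
  proof -
    have "Bf G0 x1 z = \<pi>/2 * bN \<rho> \<alpha> \<beta> p q" unfolding B x1_def z_def by simp
    also have "bN \<rho> \<alpha> \<beta> p q = w * bN \<rho> 1 0 (k*x) (-k)" unfolding p_def q_def bN_mult1 ab(3) ..
    finally show ?thesis unfolding bN_def by (simp add: algebra_simps)
  qed
  have Qz: "Qf G0 z = \<pi>*w*k^2*(c+\<rho>)"
  proof -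
    have "Qf G0 z = \<pi>/2 * bN \<rho> p q p q" unfolding Qf_def B z_def by simp
    also have "bN \<rho> p q p q = w * bN \<rho> (k*x) (-k) (k*x) (-k)" unfolding p_def q_def bN_mult ab(3) ..
    also have "bN \<rho> (k*x) (-k) (k*x) (-k) = 2*k^2*(x^2 - x + \<rho>)" unfolding bN_diag by (simp add: power2_eq_square algebra_simps)
    finally show ?thesis unfolding X using two by simp
  qed
  define t where "t = Bf G0 x1 z / a1"
  have ta1: "2*t*a1 = \<pi>*w*k*(2*x-1)" unfolding t_def Bx1z using a1nz two by (simp add: field_simps)
  have Bt: "Bf G0 x1 z = t*a1" unfolding t_def using a1nz by simp
  have Bt': "Bf G0 z x1 = t*a1" using Bt Bs[of z x1] by simp
  define x2 where "x2 = projperp G0 x1 z"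
  have x2_eq: "x2 = z - t *s x1" unfolding x2_def projperp_def t_def Qx1 ..
  have Qx2: "Qf G0 x2 = a2"
  proof -
    have "Qf G0 x2 = Qf G0 (1 *s z + (-t) *s x1)" unfolding x2_eq by (simp add: algebra_simps)
    also have "\<dots> = Qf G0 z - 2*t*(t*a1) + t^2*a1"
      unfolding Qf_lin[OF symG] Bt' Qx1 by (simp add: algebra_simps)
    also have "\<dots> = Qf G0 z - t^2*a1" by (simp add: power2_eq_square algebra_simps)
    also have "\<dots> = a2"
    proof -
      have "(Qf G0 z - t^2*a1)*(4*a1*m) = (\<pi>*w*k^2*(c+\<rho>))*4*a1*m - (2*t*a1)^2*m"
        unfolding Qz by (simp add: power2_eq_square algebra_simps)
      also have "(2*t*a1)^2 = \<pi>^2*w^2*k^2*(4*c+1)"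
      proof -
        have "(2*x-1)^2 = 4*(x^2-x)+1" by (simp add: power2_eq_square algebra_simps)
        thus ?thesis unfolding ta1 X by (simp add: power_mult_distrib)
      qed
      also have "(\<pi>*w*k^2*(c+\<rho>))*4*a1*m - \<pi>^2*w^2*k^2*(4*c+1)*m = k^2*(\<pi>*w*(c+\<rho>)*4*a1 - \<pi>^2*w^2*(4*c+1))*m"
        by (simp add: algebra_simps)
      also have "\<dots> = - 4*a1*a1*(s^2*(1+g))*\<pi>"
        by (rule Qx2_poly[OF gnz four c_g w_g a1_g k_w])
      also have "\<dots> = a2*(4*a1*m)" unfolding a2_eq kap h_def using mnz by (simp add: field_simps)
      finally show ?thesis using a1nz mnz four_nz by simp
    qed
    finally show ?thesis .
  qed
  define Ta where "Ta = s*(x-2*\<rho>)*inverse \<rho>"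
  define Tb where "Tb = -(s*(2*x-1))*inverse \<rho>"
  have gTa: "ge v Ta 0" unfolding Ta_def using gs gx grho girho two
    by (intro ge_mult0 ge_diff) (auto intro!: ge_mult0 simp: ge_def[of v 2] v2 less_imp_le)
  have gTb: "ge v Tb 0" unfolding Tb_def using gs gx grho girho two
    by (intro ge_mult0) (auto intro!: ge_mult0 ge_diff simp: ge_def[of v 2] ge_one v2 less_imp_le)
  define Y1 where "Y1 = \<alpha>*Ta - \<rho>*\<beta>*Tb"
  define Y2 where "Y2 = \<alpha>*Tb + \<beta>*Ta + \<beta>*Tb"
  have gY1: "ge v Y1 0" unfolding Y1_def using ab gTa gTb grho by (intro ge_diff ge_mult0) auto
  have gY2: "ge v Y2 0" unfolding Y2_def using ab gTa gTb by (intro ge_add ge_mult0) auto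
  define x3 where "x3 = (vector [g/2*Y1, g/2*Y2, -(h* s)] :: 'a^3)"
  have BX: "Bf G0 x3 b = \<pi>*g/4 * bN \<rho> Y1 Y2 (b$1) (b$2) + \<Delta>*\<delta>*(-(h* s))*(b$3)" for b
    unfolding B x3_def vector_3 bN_scale1 using two four_nz by (simp add: field_simps)
  have Bx1x3: "Bf G0 x1 x3 = 0"
  proof -
    have "bN \<rho> Y1 Y2 \<alpha> \<beta> = bN \<rho> \<alpha> \<beta> Y1 Y2" by (rule bN_sym)
    also have "\<dots> = w * bN \<rho> 1 0 Ta Tb"
      unfolding Y1_def Y2_def bN_mult1 ab(3) ..
    also have "bN \<rho> 1 0 Ta Tb = s*\<Delta>*inverse \<rho>" unfolding bN_def Ta_def Tb_def \<Delta>_def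
      by (simp add: algebra_simps)
    finally have e: "bN \<rho> Y1 Y2 \<alpha> \<beta> = w*(s*\<Delta>*inverse \<rho>)" .
    have "Bf G0 x1 x3 = Bf G0 x3 x1" by (rule Bs)
    also have "\<dots> = \<pi>*g/4 * (w*(s*\<Delta>*inverse \<rho>)) - \<Delta>*\<delta>*h* s" unfolding BX x1_def vector_3 e by simp
    also have "\<pi>*g/4 * (w*(s*\<Delta>*inverse \<rho>)) = (w*(g*\<pi>))* s*\<Delta>/(4*\<rho>)" using rhonz four_nz by (simp add: field_simps)
    also have "\<dots> = \<Delta>*\<delta>*h* s" unfolding w_g h_def using rhonz four_nz by (simp add: field_simps)
    finally show ?thesis by simp
  qed
  have Bzx3: "Bf G0 z x3 = 0"
  proof -
    have "bN \<rho> Y1 Y2 p q = bN \<rho> p q Y1 Y2" by (rule bN_sym)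
    also have "\<dots> = w * bN \<rho> (k*x) (-k) Ta Tb"
      unfolding Y1_def Y2_def p_def q_def bN_mult ab(3) ..
    also have "bN \<rho> (k*x) (-k) Ta Tb = 0" unfolding bN_def Ta_def Tb_def using rhonz
      by (simp add: algebra_simps)
    finally have e: "bN \<rho> Y1 Y2 p q = 0" by simp
    have "Bf G0 z x3 = Bf G0 x3 z" by (rule Bs)
    thus ?thesis unfolding BX z_def vector_3 e by simp
  qed
  have Bx2x3: "Bf G0 x2 x3 = 0" unfolding x2_eq Bf_diff1 Bf_smult1 Bzx3 Bx1x3 by simp
  have Bx1x2: "Bf G0 x1 x2 = 0" unfolding x2_eq Bf_diff2 Bf_smult2 Bt Qx1[symmetric]
    by (simp add: Qf_def)
  have Qx3: "Qf G0 x3 = a3"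
  proof -
    have "bN \<rho> Y1 Y2 Y1 Y2 = w * bN \<rho> Ta Tb Ta Tb" unfolding Y1_def Y2_def bN_mult ab(3) ..
    also have "bN \<rho> Ta Tb Ta Tb = -(2* s^2*\<Delta>*(c+\<rho>))*inverse (\<rho>^2)"
    proof -
      have Tar: "Ta*\<rho> = s*(x-2*\<rho>)" unfolding Ta_def using rhonz by simp
      have Tbr: "Tb*\<rho> = -(s*(2*x-1))" unfolding Tb_def using rhonz by simp
      have "bN \<rho> Ta Tb Ta Tb * \<rho>^2 = bN \<rho> (Ta*\<rho>) (Tb*\<rho>) (Ta*\<rho>) (Tb*\<rho>)"
        unfolding bN_def by (simp add: power2_eq_square algebra_simps)
      also have "\<dots> = -(2* s^2*\<Delta>*((x^2-x)+\<rho>))" unfolding Tar Tbr bN_def \<Delta>_def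
        by (simp add: power2_eq_square algebra_simps)
      finally have "bN \<rho> Ta Tb Ta Tb * \<rho>^2 = -(2* s^2*\<Delta>*((x^2-x)+\<rho>))" .
      thus ?thesis unfolding X using rhonz by (simp add: field_simps)
    qed
    finally have e: "bN \<rho> Y1 Y2 Y1 Y2 = w*(-(2* s^2*\<Delta>*(c+\<rho>))*inverse (\<rho>^2))" .
    have "Qf G0 x3 = \<pi>*g/4 * (g/2) * bN \<rho> Y1 Y2 Y1 Y2 + \<Delta>*\<delta>*(h* s)^2"
      unfolding Qf_def BX unfolding x3_def vector_3 bN_scale2 using two four_nz by (simp add: field_simps power2_eq_square)
    also have "\<dots> = -(w*(g*\<pi>))*g* s^2*\<Delta>*(c+\<rho>)/(4*\<rho>^2) + \<Delta>*\<delta>*(h* s)^2"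
      unfolding e using rhonz four_nz two eight_nz sixteen_nz by (simp add: field_simps)
    also have "\<dots> = \<delta>*h* s^2*(\<Delta>*h - (c*(\<Delta>*g))/\<rho> - \<Delta>*g)"
      unfolding w_g h_def using rhonz four_nz two eight_nz sixteen_nz by (simp add: field_simps power2_eq_square)
    also have "c*(\<Delta>*g) = -4*\<rho>^2" using c_g unfolding \<Delta>_def by (simp add: ac_simps)
    also have "\<Delta>*h - -4*\<rho>^2/\<rho> - \<Delta>*g = 1" unfolding h_def \<Delta>_def using rhonz by (simp add: field_simps power2_eq_square)
    finally show ?thesis unfolding a3_def kap by (simp add: ac_simps)
  qed
  define c2 where "c2 y = Bf G0 x2 y / a2" for y
  define c3 where "c3 y = Bf G0 x3 y / a3" for y
  have n1: "Qf G0 x1 \<noteq> 0" using Qx1 a1nz by simp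
  have n2: "Qf G0 x2 \<noteq> 0" using Qx2 a2nz by simp
  have n3: "Qf G0 x3 \<noteq> 0" using Qx3 a3nz by simp
  have dec: "y = (Bf G0 x1 y / a1) *s x1 + c2 y *s x2 + c3 y *s x3" for y
    using orth3[OF symG Bx1x2 Bx1x3 Bx2x3 n1 n2 n3, of y] unfolding Qx1 Qx2 Qx3 c2_def c3_def .
  have P1: "projperp G0 x1 y = c2 y *s x2 + c3 y *s x3" for y
  proof -
    have "projperp G0 x1 y = y - (Bf G0 x1 y / a1) *s x1" unfolding projperp_def Qx1 ..
    also have "\<dots> = c2 y *s x2 + c3 y *s x3" using dec[of y] by (metis add.assoc add_diff_cancel_left')
    finally show ?thesis .
  qed
  have B22: "Bf G0 x2 x2 = a2" using Qx2 unfolding Qf_def .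
  have B33: "Bf G0 x3 x3 = a3" using Qx3 unfolding Qf_def .
  have P2: "projperp G0 x2 (d2 *s x2 + d3 *s x3) = d3 *s x3" for d2 d3
    unfolding projperp_def Qx2 by (simp add: Bf_add2 Bf_smult2 Bx2x3 B22 a2nz)
  have P3: "projperp G0 x3 (d3 *s x3) = 0" for d3
    unfolding projperp_def Qx3 by (simp add: Bf_smult2 B33 a3nz)
  have Q1: "Qf G0 (d2 *s x2 + d3 *s x3) = d2^2*a2 + d3^2*a3" for d2 d3
    unfolding Qf_lin[OF symG] Bx2x3 Qx2 Qx3 by simp
  have Q2: "Qf G0 (d3 *s x3) = d3^2*a3" for d3
    unfolding Qf_def Bf_smult1 Bf_smult2 B33 by (simp add: power2_eq_square)
  define L0 where "L0 = (stdlat v :: ('a^3) set)"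
  have L0_iff: "y \<in> L0 \<longleftrightarrow> ge v (y$1) 0 \<and> ge v (y$2) 0 \<and> ge v (y$3) 0" for y
    unfolding L0_def stdlat_def by (simp add: forall_3 Oring_ge)
  have g20: "ge v 2 0" using v2 by (simp add: ge_def)
  have gbN: "ge v (bN \<rho> a b a' b') 0" if "ge v a 0" "ge v b 0" "ge v a' 0" "ge v b' 0" for a b a' b'
    unfolding bN_def using that grho g20 by (intro ge_add ge_mult0) auto
  have gpi0: "ge v \<pi> 0" using gpi ge_mono by fastforce
  have gQ0: "ge v (Qf G0 y) 0" if "y \<in> L0" for y
  proof -
    have y: "ge v (y$1) 0" "ge v (y$2) 0" "ge v (y$3) 0" using that L0_iff by auto
    have "Qf G0 y = \<pi> * ((y$1)^2 + (y$1)*(y$2) + \<rho>*(y$2)^2) + \<Delta>*\<delta>*(y$3)*(y$3)"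
      unfolding Qf_def B bN_diag using two by simp
    also have "ge v \<dots> 0" using y gpi0 grho gdel unit_ge[OF uD]
      by (intro ge_add ge_mult0 ge_pow0) auto
    finally show ?thesis .
  qed
  have gc3: "ge v (c3 y) 0" if "y \<in> L0" for y
  proof -
    have y: "ge v (y$1) 0" "ge v (y$2) 0" "ge v (y$3) 0" using that L0_iff by auto
    have eg: "\<pi>*g/4 = r*(\<pi>*m/4)" unfolding g_def by (simp add: ac_simps)
    have gpg: "ge v (\<pi>*g/4) 0" unfolding eg by (rule ge_mult0[OF gr gpm4])
    have "ge v (Bf G0 x3 y) 0" unfolding BX using y gpg gbN[OF gY1 gY2 y(1) y(2)] unit_ge[OF uD] gdel unit_ge[OF uh] gs
      by (intro ge_add ge_mult0) (auto simp: ge_neg intro: ge_mult0)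
    thus ?thesis unfolding c3_def divide_inverse using ge_mult0 unit_inv_ge[OF ua3] by blast
  qed
  have gc2: "ge v (c2 y) 0" if "y \<in> L0" for y
  proof -
    have y: "ge v (y$1) 0" "ge v (y$2) 0" "ge v (y$3) 0" using that L0_iff by auto
    define bzy where "bzy = bN \<rho> p q (y$1) (y$2)"
    define bxz where "bxz = bN \<rho> \<alpha> \<beta> p q"
    define bxy where "bxy = bN \<rho> \<alpha> \<beta> (y$1) (y$2)"
    have Bzy: "Bf G0 z y = \<pi>/2*bzy" unfolding B bzy_def z_def by simp
    have Bxy: "Bf G0 x1 y = \<pi>/2*bxy + \<Delta>*\<delta>*(y$3)" unfolding B bxy_def x1_def by simp
    have Bxz: "Bf G0 x1 z = \<pi>/2*bxz" unfolding B bxz_def x1_def z_def by simp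
    have "c2 y = (\<pi>/2*bzy - (\<pi>/2*bxz/a1)*(\<pi>/2*bxy + \<Delta>*\<delta>*(y$3))) / (-(a1*\<kappa>*\<pi>/m))"
      unfolding c2_def x2_eq Bf_diff1 Bf_smult1 Bzy Bxy t_def Bxz a2_eq ..
    also have "\<dots> = -((m/2)*bzy)*inverse (a1*\<kappa>) + bxz*inverse (a1^2*\<kappa>)*((\<pi>*m/4)*bxy + (m/2)*\<Delta>*\<delta>*(y$3))"
      using a1nz kapnz pinz mnz two four_nz eight_nz sixteen_nz by (simp add: field_simps power2_eq_square)
    also have "ge v \<dots> 0"
    proof -
      have g1: "ge v bzy 0" unfolding bzy_def using gbN gp gq y by blast
      have g2: "ge v bxz 0" unfolding bxz_def using gbN gp gq ab by blast
      have g3: "ge v bxy 0" unfolding bxy_def using gbN ab y by blast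
      have i1: "ge v (inverse (a1*\<kappa>)) 0" using unit_inv_ge unit_mult ua1 kappa(1) by blast
      have i2: "ge v (inverse (a1^2*\<kappa>)) 0" using unit_inv_ge unit_mult unit_pow ua1 kappa(1) by blast
      have t1: "ge v (-((m/2)*bzy)*inverse (a1*\<kappa>)) 0"
        using ge_mult0[OF ge_mult0[OF gm2 g1] i1] ge_neg by (metis mult_minus_left)
      have t2: "ge v ((\<pi>*m/4)*bxy + (m/2)*\<Delta>*\<delta>*(y$3)) 0"
        by (rule ge_add[OF ge_mult0[OF gpm4 g3] ge_mult0[OF ge_mult0[OF ge_mult0[OF gm2 unit_ge[OF uD]] gdel] y(3)]])
      show ?thesis by (rule ge_add[OF t1 ge_mult0[OF ge_mult0[OF g2 i2] t2]])
    qed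
    finally show ?thesis .
  qed
  define L1 where "L1 = projperp G0 x1 ` L0"
  define L2 where "L2 = projperp G0 x2 ` L1"
  have L2_eq: "L2 = (\<lambda>y. c3 y *s x3) ` L0" unfolding L2_def L1_def image_image P1 P2 ..
  have x1L: "x1 \<in> L0" unfolding L0_iff x1_def using ab ge_one by simp
  have zL: "z \<in> L0" unfolding L0_iff z_def using gp gq by simp
  have x2L: "x2 \<in> L1" unfolding L1_def x2_def using zL by blast
  define y' where "y' = (vector [0, 0, -(s*inverse \<Delta>)] :: 'a^3)"
  have y'L: "y' \<in> L0" unfolding L0_iff y'_def using gs giD by (simp add: ge_mult0)
  have c3y': "c3 y' = 1"
  proof -
    have "Bf G0 x3 y' = \<Delta>*\<delta>*(-(h* s))*(-(s*inverse \<Delta>))" unfolding BX y'_def bN_def by simp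
    also have "\<dots> = a3" unfolding a3_def kap using Dnz by (simp add: power2_eq_square field_simps)
    finally show ?thesis unfolding c3_def using a3nz by simp
  qed
  have x3L: "x3 \<in> L2" unfolding L2_eq
    by (rule image_eqI[where x=y']) (use c3y' y'L in simp)+
  have b1: "pid v (Qf G0 x1) = oideal v (Qf G0 ` L0)"
  proof (rule pid_oideal)
    show "Qf G0 x1 \<in> Qf G0 ` L0" using x1L by blast
    show "Qf G0 x1 \<noteq> 0" by (rule n1)
    fix u assume "u \<in> Qf G0 ` L0"
    then obtain y where "y \<in> L0" "u = Qf G0 y" by blast
    thus "ge v (u / Qf G0 x1) 0" unfolding Qx1 divide_inverse using gQ0 unit_inv_ge[OF ua1] ge_mult0 by blast
  qed
  have ga32: "ge v (a3/a2) 0"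
  proof -
    have "a3/a2 = -((m/\<pi>)*inverse ks)" unfolding a3_def a2_eq a1_def using dnz kapnz pinz mnz uks unit_nz
      by (simp add: field_simps)
    thus ?thesis using ge_mult0[OF gmpi unit_inv_ge[OF uks]] by simp
  qed
  have b2: "pid v (Qf G0 x2) = oideal v (Qf G0 ` L1)"
  proof (rule pid_oideal)
    show "Qf G0 x2 \<in> Qf G0 ` L1" using x2L by blast
    show "Qf G0 x2 \<noteq> 0" by (rule n2)
    fix u assume "u \<in> Qf G0 ` L1"
    then obtain y where y: "y \<in> L0" "u = Qf G0 (projperp G0 x1 y)" unfolding L1_def by blast
    have "u / Qf G0 x2 = (c2 y)^2 + (c3 y)^2*(a3/a2)" unfolding y(2) P1 Q1 Qx2 using a2nz by (simp add: field_simps)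
    also have "ge v \<dots> 0" using gc2[OF y(1)] gc3[OF y(1)] ga32 by (intro ge_add ge_mult0 ge_pow0) auto
    finally show "ge v (u / Qf G0 x2) 0" .
  qed
  have b3: "pid v (Qf G0 x3) = oideal v (Qf G0 ` L2)"
  proof (rule pid_oideal)
    show "Qf G0 x3 \<in> Qf G0 ` L2" using x3L by blast
    show "Qf G0 x3 \<noteq> 0" by (rule n3)
    fix u assume "u \<in> Qf G0 ` L2"
    then obtain y where y: "y \<in> L0" "u = Qf G0 (c3 y *s x3)" unfolding L2_eq by blast
    have "u / Qf G0 x3 = (c3 y)^2" unfolding y(2) Q2 Qx3 using a3nz by simp
    thus "ge v (u / Qf G0 x3) 0" using ge_pow0[OF gc3[OF y(1)]] by simp
  qed
  have b4: "projperp G0 x3 ` L2 = {0}" unfolding L2_eq image_image P3 using x1L by blast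
  have bong: "bong v G0 [x1, x2, x3] L0"
    using x1L n1 b1 x2L n2 b2 x3L n3 b3 b4 unfolding L2_def L1_def by simp
  have iso: "lattice_iso (gram_lhs \<pi> \<rho> \<delta>) G0 id (stdlat v) L0"
    unfolding lattice_iso_def G0_def L0_def by simp
  show ?thesis
    apply (rule exI[of _ G0], rule exI[of _ L0], rule exI[of _ id], rule exI[of _ x1], rule exI[of _ x2], rule exI[of _ x3])
    using symG bong Qx1 Qx2 Qx3 iso unfolding a1_def a2_def a3_def ks_def by simp
qed


end
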